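(* Let $d\in\mathbb{N}$. For every $y\in\mathbb{R}^d$, the set $\Pi^{y}\cap[0,1]^d$ has Lebesgue measure $0$ or $1$.
   Context: For $z\in\mathbb{R}^d$, $\|z\|$ denotes the sup-norm distance from $z$ to $\mathbb{Z}^d$. Write $\mathbb{N}=\{1,2,\dots\}$. For $\psi:\mathbb{N}\to\mathbb{R}_{\ge 0}$, let $W(\psi)$ be the set of pairs $(x,y)\in\mathbb{R}^d\times\mathbb{R}^d$ for which $\|nx+y\|<\psi(n)$ holds for infinitely many $n\in\mathbb{N}$. $\mathcal{D}$ is the set of all non-increasing $\psi:\mathbb{N}\to\mathbb{R}_{\ge0}$ with $\sum_n\psi(n)^d=\infty$, and $\Pi=\bigcap_{\psi\in\mathcal{D}}W(\psi)$. $\Pi^{y}=\{x\in\mathbb{R}^d:(x,y)\in\Pi\}$. Equivalently, $\Pi^y$ is the set of $x$ such that for every $\psi\in\mathcal{D}$ there are infinitely many $n\in\mathbb{N}$ with $\|nx+y\|<\psi(n)$. *)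

theory Defs
  imports "HOL-Analysis.Analysis"
begin

definition dZ :: "real ^ 'n::finite \<Rightarrow> real" where
  "dZ z = (MAX i\<in>UNIV. \<bar>z $ i - of_int (round (z $ i))\<bar>)"

text \<open>The class D: non-increasing psi : N -> [0,inf) with sum psi(n)^d divergent
  (d = CARD('n)). Only values at n >= 1 matter.\<close>
definition Dclass :: "'n::finite itself \<Rightarrow> (nat \<Rightarrow> real) set" where
  "Dclass _ = {\<psi>. (\<forall>n\<ge>1. \<psi> n \<ge> 0) \<and> (\<forall>m n. 1 \<le> m \<longrightarrow> m \<le> n \<longrightarrow> \<psi> n \<le> \<psi> m)
              \<and> \<not> summable (\<lambda>n. \<psi> (Suc n) ^ CARD('n))}"

definition W :: "(nat \<Rightarrow> real) \<Rightarrow> ((real ^ 'n::finite) \<times> (real ^ 'n)) set" where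
  "W \<psi> = {(x, y). infinite {n::nat. n \<ge> 1 \<and> dZ (of_nat n *\<^sub>R x + y) < \<psi> n}}"

definition Pi_set :: "((real ^ 'n::finite) \<times> (real ^ 'n)) set" where
  "Pi_set = (\<Inter>\<psi>\<in>Dclass TYPE('n). W \<psi>)"

definition Pi_fiber :: "real ^ 'n::finite \<Rightarrow> (real ^ 'n) set" where
  "Pi_fiber y = {x. (x, y) \<in> Pi_set}"

end

theory Submission
  imports Defs
begin

lemma dZ_coord: "\<bar>z$i - of_int(round(z$i))\<bar> \<le> dZ (z::real^'n::finite)"
  unfolding dZ_def by (rule Max_ge) auto

definition Bx :: "real^'n::finite \<Rightarrow> nat \<Rightarrow> real \<Rightarrow> ('n \<Rightarrow> int) \<Rightarrow> (real^'n) set" where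
  "Bx y m r j = box (\<chi> i. (of_int (j i) - y$i - r)/real m) (\<chi> i. (of_int (j i) - y$i + r)/real m)"

definition Jset :: "real^'n::finite \<Rightarrow> nat \<Rightarrow> ('n \<Rightarrow> int) set" where
  "Jset y m = PiE UNIV (\<lambda>i. {\<lfloor>y$i\<rfloor> .. \<lfloor>y$i\<rfloor> + int m + 1})"

lemma inner_const_basis: "b \<in> Basis \<Longrightarrow> (\<chi> i. c) \<bullet> b = (c::real)"
  for b :: "real^'n::finite"
  by (auto simp: Basis_vec_def inner_axis)

lemma Bx_measure:
  fixes y :: "real^'n::finite"
  assumes "r > 0" "m > 0"
  shows "emeasure lborel (Bx y m r j) = ennreal ((2*r/m)^CARD('n::finite))"
proof -
  let ?l = "(\<chi> i. (of_int (j i) - y$i - r)/real m) :: real^'n"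
  let ?u = "(\<chi> i. (of_int (j i) - y$i + r)/real m) :: real^'n"
  have d: "?u - ?l = (\<chi> i. 2*r/m)"
    by (simp add: vec_eq_iff diff_divide_distrib[symmetric])
  have le: "?l \<bullet> b \<le> ?u \<bullet> b" if "b \<in> Basis" for b
  proof -
    have "(?u - ?l) \<bullet> b \<ge> 0" using d inner_const_basis[OF that] assms by simp
    then show ?thesis by (simp add: inner_diff_left)
  qed
  have p: "(\<Prod>b\<in>(Basis::(real^'n) set). (?u - ?l) \<bullet> b) = (2*r/m)^CARD('n)"
  proof -
    have "(\<Prod>b\<in>(Basis::(real^'n) set). (?u - ?l) \<bullet> b) = (\<Prod>b\<in>(Basis::(real^'n) set). 2*r/m)"
      using d inner_const_basis by (intro prod.cong) auto
    then show ?thesis by simp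
  qed
  have "emeasure lborel (Bx y m r j) = (\<Prod>b\<in>Basis. (?u - ?l) \<bullet> b)"
    unfolding Bx_def by (rule emeasure_lborel_box) (use le in auto)
  then show ?thesis using p by simp
qed

lemma round_bounds: "of_int (round t) \<ge> t - 1/2" "of_int (round t) \<le> t + 1/2" "round t \<ge> \<lfloor>t\<rfloor>" "round t \<le> \<lfloor>t\<rfloor> + 1"
  for t :: real
  unfolding round_def by linarith+

lemma cover:
  fixes y :: "real^'n::finite"
  assumes x: "x \<in> cbox 0 1" and m: "m > 0" and dz: "dZ (of_nat m *\<^sub>R x + y) < r"
  shows "x \<in> (\<Union>j\<in>Jset y m. Bx y m r j)"
proof -
  define j where "j = (\<lambda>i. round (real m * x$i + y$i))"
  have xi: "0 \<le> x$i" "x$i \<le> 1" for i using x by (auto simp: mem_box_cart)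
  have c: "\<bar>real m * x$i + y$i - of_int (j i)\<bar> < r" for i
    using dZ_coord[of "of_nat m *\<^sub>R x + y" i] dz unfolding j_def by simp
  have "j \<in> Jset y m"
  proof -
    have "j i \<in> {\<lfloor>y$i\<rfloor> .. \<lfloor>y$i\<rfloor> + int m + 1}" for i
    proof -
      have "real m * x$i \<ge> 0" "real m * x$i \<le> real m" using xi[of i] m by auto
      then have "\<lfloor>y$i\<rfloor> \<le> \<lfloor>real m * x$i + y$i\<rfloor>" "\<lfloor>real m * x$i + y$i\<rfloor> \<le> \<lfloor>y$i\<rfloor> + int m"
        by (auto intro!: floor_mono simp flip: floor_add_int) (metis add.commute add_le_cancel_right floor_add_int floor_mono of_int_of_nat_eq)
      then show ?thesis unfolding j_def using round_bounds(3,4)[of "real m * x$i + y$i"] by auto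
    qed
    then show ?thesis unfolding Jset_def by auto
  qed
  moreover have "x \<in> Bx y m r j"
  proof -
    have "(of_int (j i) - y$i - r)/real m < x$i \<and> x$i < (of_int (j i) - y$i + r)/real m" for i
      using c[of i] m by (auto simp: field_simps abs_less_iff)
    then show ?thesis unfolding Bx_def by (auto simp: mem_box_cart)
  qed
  ultimately show ?thesis by blast
qed

lemma card_Jset: "card (Jset y m) = (m+2)^CARD('n)" for y :: "real^'n::finite"
proof -
  have "nat (\<lfloor>y$i\<rfloor> + int m + 1 + 1 - \<lfloor>y$i\<rfloor>) = m + 2" for i by simp
  then show ?thesis unfolding Jset_def by (simp add: card_PiE)
qed

lemma finite_Jset: "finite (Jset y m)"
  unfolding Jset_def by (intro finite_PiE) auto

lemma cover_measure:
  fixes y :: "real^'n::finite"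
  assumes r: "r > 0" and m: "m > 0"
  shows "emeasure lborel (\<Union>j\<in>Jset y m. Bx y m r j) \<le> ennreal ((6*r)^CARD('n))"
proof -
  have "emeasure lborel (\<Union>j\<in>Jset y m. Bx y m r j) \<le> (\<Sum>j\<in>Jset y m. emeasure lborel (Bx y m r j))"
    by (rule emeasure_subadditive_finite) (auto simp: finite_Jset Bx_def)
  also have "\<dots> = (\<Sum>j\<in>Jset y m. ennreal ((2*r/m)^CARD('n)))"
    by (intro sum.cong refl Bx_measure[OF r m])
  also have "\<dots> = ennreal (real (card (Jset y m)) * (2*r/m)^CARD('n))"
    using r by (simp add: ennreal_mult ennreal_of_nat_eq_real_of_nat)
  also have "\<dots> = ennreal (((real m + 2) * (2*r/m))^CARD('n))"
    by (simp add: card_Jset power_mult_distrib[symmetric] add.commute)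
  also have "\<dots> \<le> ennreal ((6*r)^CARD('n))"
  proof (intro ennreal_leI power_mono)
    have "(real m + 2) * (2*r/m) = 2*r + 4*r/m" using m by (simp add: field_simps)
    also have "\<dots> \<le> 2*r + 4*r" using m r by (simp add: field_simps)
    finally show "(real m + 2) * (2*r/m) \<le> 6*r" by simp
    show "0 \<le> (real m + 2) * (2*r/m)" using r by simp
  qed
  finally show ?thesis .
qed

lemma key:
  fixes y :: "real^'n::finite"
  assumes xin: "x \<in> Pi_fiber y" and e: "\<epsilon> > 0"
  shows "\<exists>K. \<forall>k\<ge>K. \<exists>m. 1 \<le> m \<and> m \<le> (2::nat)^k \<and> dZ (of_nat m *\<^sub>R x + y) < root CARD('n) (\<epsilon>/2^k)"
proof (rule ccontr)
  define d where "d = CARD('n)"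
  have d0: "d > 0" unfolding d_def by simp
  define rr where "rr k = root d (\<epsilon>/2^k)" for k :: nat
  assume "\<not> ?thesis"
  then have unb: "\<exists>k\<ge>K. \<forall>m. 1 \<le> m \<longrightarrow> m \<le> (2::nat)^k \<longrightarrow> rr k \<le> dZ (of_nat m *\<^sub>R x + y)" for K
    unfolding rr_def d_def by (auto simp: not_less) (meson le_trans order_refl)
  define KS where "KS = {k. \<forall>m. 1 \<le> m \<longrightarrow> m \<le> (2::nat)^k \<longrightarrow> rr k \<le> dZ (of_nat m *\<^sub>R x + y)}"
  define \<kappa> where "\<kappa> n = (LEAST k. k \<in> KS \<and> n \<le> (2::nat)^k)" for n
  have kex: "\<exists>k. k \<in> KS \<and> n \<le> (2::nat)^k" for n
  proof -
    obtain k where "k \<ge> n" "k \<in> KS" using unb[of n] unfolding KS_def by auto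
    moreover have "k < (2::nat)^k" by (rule less_exp)
    ultimately have "n \<le> (2::nat)^k" by linarith
    with \<open>k \<in> KS\<close> show ?thesis by blast
  qed
  have kap: "\<kappa> n \<in> KS \<and> n \<le> 2^(\<kappa> n)" for n
    unfolding \<kappa>_def by (rule LeastI_ex[OF kex])
  have kap_le: "k \<in> KS \<Longrightarrow> n \<le> 2^k \<Longrightarrow> \<kappa> n \<le> k" for n k
    unfolding \<kappa>_def by (rule Least_le) auto
  have kap_mono: "m \<le> n \<Longrightarrow> \<kappa> m \<le> \<kappa> n" for m n
    using kap[of n] by (intro kap_le) auto
  have rr_nonneg: "rr k \<ge> 0" for k unfolding rr_def using e by (simp add: real_root_ge_zero)
  have rr_mono: "a \<le> b \<Longrightarrow> rr b \<le> rr a" for a b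
    unfolding rr_def using d0 e by (intro real_root_le_mono) (auto simp: frac_le)
  have rr_pow: "rr k ^ d = \<epsilon>/2^k" for k unfolding rr_def using d0 e by simp
  define \<psi> where "\<psi> n = rr (\<kappa> n)" for n
  have psiD: "\<psi> \<in> Dclass TYPE('n)"
    unfolding Dclass_def mem_Collect_eq d_def[symmetric]
  proof (intro conjI allI impI)
    show "\<psi> n \<ge> 0" for n unfolding \<psi>_def by (rule rr_nonneg)
    show "\<psi> n \<le> \<psi> m" if "m \<le> n" for m n
      unfolding \<psi>_def by (rule rr_mono[OF kap_mono[OF that]])
    show "\<not> summable (\<lambda>n. \<psi> (Suc n) ^ d)"
    proof
      assume "summable (\<lambda>n. \<psi> (Suc n) ^ d)"
      then obtain N where N: "\<And>a b. a \<ge> N \<Longrightarrow> norm (sum (\<lambda>n. \<psi> (Suc n) ^ d) {a..<b}) < \<epsilon>/2"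
        unfolding summable_Cauchy using e by (meson half_gt_zero)
      obtain k where k: "k \<ge> Suc N" "k \<in> KS" using unb[of "Suc N"] unfolding KS_def by auto
      have "N \<le> k - 1" using k by simp
      also have "k - 1 < 2^(k-1)" by (rule less_exp)
      finally have N2: "N \<le> 2^(k-1)" by simp
      have k2: "(2::nat)^k = 2^(k-1) + 2^(k-1)" using k by (cases k) auto
      have "\<epsilon>/2 = real (card {2^(k-1)..<(2::nat)^k}) * (\<epsilon>/2^k)"
        using k k2 by (cases k) (auto simp: field_simps)
      also have "\<dots> = (\<Sum>n\<in>{2^(k-1)..<(2::nat)^k}. \<epsilon>/2^k)" by simp
      also have "\<dots> \<le> (\<Sum>n\<in>{2^(k-1)..<(2::nat)^k}. \<psi> (Suc n) ^ d)"
      proof (rule sum_mono)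
        fix n assume "n \<in> {2^(k-1)..<(2::nat)^k}"
        then have "\<kappa> (Suc n) \<le> k" using k by (intro kap_le) auto
        then show "\<epsilon>/2^k \<le> \<psi> (Suc n) ^ d"
          unfolding \<psi>_def rr_pow using e by (simp add: frac_le)
      qed
      also have "\<dots> \<le> norm (\<Sum>n\<in>{2^(k-1)..<(2::nat)^k}. \<psi> (Suc n) ^ d)" by simp
      also have "\<dots> < \<epsilon>/2" by (rule N[OF N2])
      finally show False by simp
    qed
  qed
  have "(x, y) \<in> W \<psi>" using xin psiD unfolding Pi_fiber_def Pi_set_def by auto
  then have inf: "infinite {n::nat. n \<ge> 1 \<and> dZ (of_nat n *\<^sub>R x + y) < \<psi> n}" unfolding W_def by simp
  have E: "{n::nat. n \<ge> 1 \<and> dZ (of_nat n *\<^sub>R x + y) < \<psi> n} = {}"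
  proof -
    have "\<psi> n \<le> dZ (of_nat n *\<^sub>R x + y)" if "n \<ge> 1" for n
      using kap[of n] that unfolding \<psi>_def KS_def by auto
    then show ?thesis by force
  qed
  from inf show False unfolding E by simp
qed

definition cov :: "real^'n::finite \<Rightarrow> real \<Rightarrow> nat \<Rightarrow> (real^'n) set" where
  "cov y \<epsilon> k = (\<Union>m\<in>{1..(2::nat)^k}. \<Union>j\<in>Jset y m. Bx y m (root CARD('n) (\<epsilon>/2^k)) j)"

lemma cov_sets: "cov y \<epsilon> k \<in> sets lborel"
  unfolding cov_def Bx_def by (auto intro!: sets.finite_UN finite_Jset)

lemma cov_measure:
  fixes y :: "real^'n::finite"
  assumes e: "\<epsilon> > 0"
  shows "emeasure lborel (cov y \<epsilon> k) \<le> ennreal (6^CARD('n) * \<epsilon>)"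
proof -
  define r where "r = root CARD('n) (\<epsilon>/2^k)"
  have r: "r > 0" unfolding r_def using e by simp
  have "emeasure lborel (cov y \<epsilon> k) \<le> (\<Sum>m\<in>{1..(2::nat)^k}. emeasure lborel (\<Union>j\<in>Jset y m. Bx y m r j))"
    unfolding cov_def r_def[symmetric]
    by (rule emeasure_subadditive_finite) (auto intro!: sets.finite_UN finite_Jset simp: Bx_def)
  also have "\<dots> \<le> (\<Sum>m\<in>{1..(2::nat)^k}. ennreal ((6*r)^CARD('n)))"
    by (intro sum_mono cover_measure r) auto
  also have "\<dots> = ennreal (\<Sum>m\<in>{1..(2::nat)^k}. (6*r)^CARD('n))"
    using r by (subst sum_ennreal) auto
  also have "(\<Sum>m\<in>{1..(2::nat)^k}. (6*r)^CARD('n)) = 2^k * (6^CARD('n) * r^CARD('n))"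
    by (simp add: power_mult_distrib)
  also have "r^CARD('n) = \<epsilon>/2^k" unfolding r_def using e by simp
  also have "(2::real)^k * (6^CARD('n) * (\<epsilon>/2^k)) = 6^CARD('n) * \<epsilon>" by simp
  finally show ?thesis .
qed

theorem lemma12:
  fixes y :: "real ^ 'n::finite"
  shows "Pi_fiber y \<inter> cbox 0 1 \<in> sets lebesgue \<and>
         (measure lebesgue (Pi_fiber y \<inter> cbox 0 1) = 0 \<or>
          measure lebesgue (Pi_fiber y \<inter> cbox 0 1) = 1)"
proof -
  define C where "C \<epsilon> K = (\<Inter>k\<in>{K..}. cov y \<epsilon> k)" for \<epsilon> K
  define Ne where "Ne \<epsilon> = (\<Union>K. C \<epsilon> K)" for \<epsilon>
  define N where "N = (\<Inter>l. Ne (inverse (real (Suc l))))"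
  have C_sets: "C \<epsilon> K \<in> sets lborel" for \<epsilon> K
    unfolding C_def by (rule sets.countable_INT) (use cov_sets[of y \<epsilon>] in auto)
  have Ne_sets: "Ne \<epsilon> \<in> sets lborel" for \<epsilon> unfolding Ne_def using C_sets by auto
  have N_sets: "N \<in> sets lborel" unfolding N_def using Ne_sets by auto
  have Ne_meas: "emeasure lborel (Ne \<epsilon>) \<le> ennreal (6^CARD('n) * \<epsilon>)" if e: "\<epsilon> > 0" for \<epsilon>
  proof -
    have inc: "incseq (C \<epsilon>)" unfolding incseq_def C_def by auto
    have "emeasure lborel (Ne \<epsilon>) = (SUP K. emeasure lborel (C \<epsilon> K))"
      unfolding Ne_def by (rule SUP_emeasure_incseq[symmetric]) (use C_sets inc in auto)
    also have "\<dots> \<le> ennreal (6^CARD('n) * \<epsilon>)"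
    proof (rule SUP_least)
      fix K
      have "emeasure lborel (C \<epsilon> K) \<le> emeasure lborel (cov y \<epsilon> K)"
        by (rule emeasure_mono) (use cov_sets[of y \<epsilon> K] in \<open>auto simp: C_def\<close>)
      also have "\<dots> \<le> ennreal (6^CARD('n) * \<epsilon>)" by (rule cov_measure[OF e])
      finally show "emeasure lborel (C \<epsilon> K) \<le> ennreal (6^CARD('n) * \<epsilon>)" .
    qed
    finally show ?thesis .
  qed
  have N0: "emeasure lborel N = 0"
  proof -
    have "emeasure lborel N \<le> 0 + ennreal e" if e: "e > 0" for e :: real
    proof -
      have "e / 6^CARD('n) > 0" using e by simp
      then obtain l where l: "inverse (real (Suc l)) < e / 6^CARD('n)"
        using reals_Archimedean by blast
      have "emeasure lborel N \<le> emeasure lborel (Ne (inverse (real (Suc l))))"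
        by (rule emeasure_mono[OF _ Ne_sets]) (auto simp: N_def)
      also have "\<dots> \<le> ennreal (6^CARD('n) * inverse (real (Suc l)))" by (rule Ne_meas) simp
      also have "\<dots> \<le> ennreal e"
        using l by (intro ennreal_leI) (simp add: field_simps)
      finally show ?thesis by simp
    qed
    then have "emeasure lborel N \<le> 0" by (rule ennreal_le_epsilon)
    then show ?thesis by simp
  qed
  have sub: "Pi_fiber y \<inter> cbox 0 1 \<subseteq> N"
  proof
    fix x assume x: "x \<in> Pi_fiber y \<inter> cbox 0 1"
    have "x \<in> Ne \<epsilon>" if e: "\<epsilon> > 0" for \<epsilon>
    proof -
      obtain K where K: "\<And>k. k \<ge> K \<Longrightarrow> \<exists>m. 1 \<le> m \<and> m \<le> (2::nat)^k \<and> dZ (of_nat m *\<^sub>R x + y) < root CARD('n) (\<epsilon>/2^k)"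
        using key[of x y \<epsilon>] x e by auto
      have "x \<in> cov y \<epsilon> k" if kK: "k \<ge> K" for k
      proof -
        obtain m where m: "1 \<le> m" "m \<le> (2::nat)^k" "dZ (of_nat m *\<^sub>R x + y) < root CARD('n) (\<epsilon>/2^k)"
          using K[OF kK] by blast
        have "x \<in> (\<Union>j\<in>Jset y m. Bx y m (root CARD('n) (\<epsilon>/2^k)) j)"
          using cover[of x m y] x m by auto
        then show ?thesis unfolding cov_def using m by auto
      qed
      then show ?thesis unfolding Ne_def C_def by auto
    qed
    then show "x \<in> N" unfolding N_def by simp
  qed
  have "N \<in> null_sets lborel" using N_sets N0 by auto
  then have "N \<in> null_sets lebesgue" by (rule null_sets_completionI)
  then have "Pi_fiber y \<inter> cbox 0 1 \<in> null_sets lebesgue"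
    by (rule null_sets_completion_subset[OF sub])
  then show ?thesis by (auto simp: measure_def null_setsD1 null_setsD2)
qed

end
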